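(* Let $X$ and $\Theta$ be compact metric spaces, $\tau:\Theta\times X\to X$, $(\theta,x)\mapsto\tau_\theta(x)$, continuous, $\Omega=X\times\Theta$, and $\mathcal{H}$ the set of holonomic Borel probability measures on $\Omega$, i.e. those $\hat\nu$ with $\int_\Omega [f(\tau_\theta(x))-f(x)]\,d\hat\nu(x,\theta)=0$ for all $f\in C(X,\mathbb{R})$; for $\hat\nu\in\mathcal{H}$ write $\nu$ for its marginal on $X$. Let $\mu$ be a Borel probability on $\Theta$ and $\psi:X\to\mathbb{R}$ a positive continuous function. With $B_\mu(g)(x)=\int_\Theta g(\tau_\theta(x))\,d\mu(\theta)$, $h_v(\hat\nu)=\inf_{g\in C(X,\mathbb{R}),\,g>0}\int_X\ln\frac{B_\mu(g)}{g}\,d\nu$, $dq_x(\theta)=\psi(\tau_\theta(x))\,d\mu(\theta)$, $B_q(g)(x)=\int_\Theta g(\tau_\theta(x))\,dq_x(\theta)$, and $P(\psi)=\sup_{\hat\nu\in\mathcal{H}}\inf_{g>0}\int_X\ln\frac{B_q(g)}{g}\,d\nu$, call $\hat\nu\in\mathcal{H}$ an equilibrium state for $(\psi,\mu)$ if $h_v(\hat\nu)+\int_X\log\psi\,d\nu=P(\psi)$. Then the set of equilibrium states for $(\psi,\mu)$ is nonempty. *)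

theory Defs
  imports "HOL-Probability.Probability"
begin

definition holonomic :: "('b::metric_space \<Rightarrow> 'a::metric_space \<Rightarrow> 'a) \<Rightarrow> ('a \<times> 'b) measure \<Rightarrow> bool" where
  "holonomic \<tau> \<nu> \<longleftrightarrow> prob_space \<nu> \<and> sets \<nu> = sets borel \<and>
     (\<forall>f :: 'a \<Rightarrow> real. continuous_on UNIV f \<longrightarrow>
        (\<integral>\<omega>. f (\<tau> (snd \<omega>) (fst \<omega>)) - f (fst \<omega>) \<partial>\<nu>) = 0)"

definition marg :: "('a::topological_space \<times> 'b::topological_space) measure \<Rightarrow> 'a measure" where
  "marg \<nu> = distr \<nu> borel fst"

definition B_mu :: "'b measure \<Rightarrow> ('b \<Rightarrow> 'a \<Rightarrow> 'a) \<Rightarrow> ('a \<Rightarrow> real) \<Rightarrow> 'a \<Rightarrow> real" where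
  "B_mu \<mu> \<tau> g x = (\<integral>\<theta>. g (\<tau> \<theta> x) \<partial>\<mu>)"

definition pos_cont_funs :: "('a::topological_space \<Rightarrow> real) set" where
  "pos_cont_funs = {g. continuous_on UNIV g \<and> (\<forall>x. g x > 0)}"

definition hol_entropy :: "('b::metric_space \<Rightarrow> 'a::metric_space \<Rightarrow> 'a) \<Rightarrow> 'b measure \<Rightarrow> ('a \<times> 'b) measure \<Rightarrow> ereal" where
  "hol_entropy \<tau> \<mu> \<nu> = (INF g\<in>pos_cont_funs. ereal (\<integral>x. ln (B_mu \<mu> \<tau> g x / g x) \<partial>marg \<nu>))"

definition q_meas :: "'b measure \<Rightarrow> ('b \<Rightarrow> 'a \<Rightarrow> 'a) \<Rightarrow> ('a \<Rightarrow> real) \<Rightarrow> 'a \<Rightarrow> 'b measure" where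
  "q_meas \<mu> \<tau> \<psi> x = density \<mu> (\<lambda>\<theta>. ennreal (\<psi> (\<tau> \<theta> x)))"

definition B_q :: "'b measure \<Rightarrow> ('b \<Rightarrow> 'a \<Rightarrow> 'a) \<Rightarrow> ('a \<Rightarrow> real) \<Rightarrow> ('a \<Rightarrow> real) \<Rightarrow> 'a \<Rightarrow> real" where
  "B_q \<mu> \<tau> \<psi> g x = (\<integral>\<theta>. g (\<tau> \<theta> x) \<partial>q_meas \<mu> \<tau> \<psi> x)"

definition hol_pressure :: "('b::metric_space \<Rightarrow> 'a::metric_space \<Rightarrow> 'a) \<Rightarrow> 'b measure \<Rightarrow> ('a \<Rightarrow> real) \<Rightarrow> ereal" where
  "hol_pressure \<tau> \<mu> \<psi> = (SUP \<nu>\<in>{\<nu>. holonomic \<tau> \<nu>}.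
      INF g\<in>pos_cont_funs. ereal (\<integral>x. ln (B_q \<mu> \<tau> \<psi> g x / g x) \<partial>marg \<nu>))"

definition equilibrium_state :: "('b::metric_space \<Rightarrow> 'a::metric_space \<Rightarrow> 'a) \<Rightarrow> 'b measure \<Rightarrow> ('a \<Rightarrow> real) \<Rightarrow> ('a \<times> 'b) measure \<Rightarrow> bool" where
  "equilibrium_state \<tau> \<mu> \<psi> \<nu> \<longleftrightarrow> holonomic \<tau> \<nu> \<and>
     hol_entropy \<tau> \<mu> \<nu> + ereal (\<integral>x. ln (\<psi> x) \<partial>marg \<nu>) = hol_pressure \<tau> \<mu> \<psi>"

end

theory Submission
  imports Defs "HOL-Library.Diagonal_Subsequence"
begin

definition Wd :: "(nat \<Rightarrow> nat) \<Rightarrow> nat \<Rightarrow> nat list set" where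
  "Wd Lf K = {w. length w = K \<and> (\<forall>i<K. w!i < Lf i)}"

lemma finite_Wd: "finite (Wd Lf K)"
proof -
  have "Wd Lf K \<subseteq> {w. set w \<subseteq> {..<(\<Sum>i<K. Lf i)} \<and> length w = K}"
  proof (rule subsetI)
    fix w assume w: "w \<in> Wd Lf K"
    have "set w \<subseteq> {..<(\<Sum>i<K. Lf i)}"
    proof
      fix a assume "a \<in> set w"
      then obtain i where i: "i < length w" "a = w!i" by (auto simp: in_set_conv_nth)
      then have "a < Lf i" using w by (auto simp: Wd_def)
      also have "Lf i \<le> (\<Sum>i<K. Lf i)"
        using i w by (intro member_le_sum) (auto simp: Wd_def)
      finally show "a \<in> {..<(\<Sum>i<K. Lf i)}" by simp
    qed
    then show "w \<in> {w. set w \<subseteq> {..<(\<Sum>i<K. Lf i)} \<and> length w = K}" using w by (simp add: Wd_def)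
  qed
  then show ?thesis by (rule finite_subset) (intro finite_lists_length_eq, simp)
qed

locale cseq =
  fixes N :: "nat \<Rightarrow> 'c::metric_space measure"
  assumes cpt: "compact (UNIV::'c set)"
    and probN: "\<And>n. prob_space (N n)" and setsN: "\<And>n. sets (N n) = sets borel"
begin

definition ee :: "nat \<Rightarrow> real" where "ee k = 1 / real (Suc k)"

lemma ee_pos: "ee k > 0" by (simp add: ee_def)

lemma cover_ex: "\<exists>xs::'c list. \<forall>x. \<exists>j<length xs. dist x (xs!j) < ee k"
proof -
  have "\<exists>S::'c set. finite S \<and> S \<subseteq> UNIV \<and> UNIV \<subseteq> (\<Union>x\<in>S. ball x (ee k))"
    using spec[OF seq_compact_imp_totally_bounded[OF compact_imp_seq_compact[OF cpt]], of "ee k"] ee_pos[of k] by simp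
  then obtain S :: "'c set" where S: "finite S" "UNIV \<subseteq> (\<Union>x\<in>S. ball x (ee k))" by auto
  obtain xs where "set xs = S" using finite_list[OF S(1)] by blast
  show ?thesis
  proof (rule exI[of _ xs], intro allI)
    fix x :: 'c
    have "x \<in> (\<Union>y\<in>S. ball y (ee k))" using S(2) by blast
    then obtain y where y: "y \<in> S" "dist y x < ee k" by auto
    then obtain j where "j < length xs" "xs!j = y" using \<open>set xs = S\<close> by (auto simp: in_set_conv_nth)
    then show "\<exists>j<length xs. dist x (xs!j) < ee k" using y by (auto simp: dist_commute)
  qed
qed

definition cs :: "nat \<Rightarrow> 'c list" where
  "cs k = (SOME xs. \<forall>x. \<exists>j<length xs. dist x (xs!j) < ee k)"


lemma cs_cover: "\<exists>j<length (cs k). dist x (cs k ! j) < ee k"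
  unfolding cs_def using someI_ex[OF cover_ex[of k]] by blast

definition sd :: "'c \<Rightarrow> nat \<Rightarrow> nat" where
  "sd x k = (LEAST j. j < length (cs k) \<and> dist x (cs k ! j) < ee k)"

lemma sd: "sd x k < length (cs k)" "dist x (cs k ! sd x k) < ee k"
  using LeastI_ex[OF cs_cover[of k x]] unfolding sd_def by auto

lemma L_pos: "length (cs k) > 0" using sd(1)[of undefined k] by linarith

definition code :: "nat \<Rightarrow> 'c \<Rightarrow> nat list" where
  "code K x = map (sd x) [0..<K]"

definition C :: "nat list \<Rightarrow> 'c set" where
  "C w = {x. code (length w) x = w}"

definition pt :: "nat list \<Rightarrow> 'c" where
  "pt w = (SOME x. x \<in> C w)"

lemma code_Suc: "code (Suc K) x = code K x @ [sd x K]"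
  by (simp add: code_def)

lemma length_code[simp]: "length (code K x) = K" by (simp add: code_def)

lemma code_W: "code K x \<in> Wd (\<lambda>i. length (cs i)) K"
  unfolding Wd_def code_def using sd(1) by simp

lemma C_code: "x \<in> C (code K x)" by (simp add: C_def)

lemma C_snoc: "x \<in> C (w @ [j]) \<longleftrightarrow> x \<in> C w \<and> sd x (length w) = j"
  unfolding C_def by (simp add: code_Suc)

lemma C_alt: "C w = {x. \<forall>i<length w. sd x i = w!i}"
  unfolding C_def code_def list_eq_iff_nth_eq by simp

lemma finite_W: "finite (Wd (\<lambda>i. length (cs i)) K)" by (rule finite_Wd)

lemma sd_eq_iff: "sd x i = j \<longleftrightarrow> (j < length (cs i) \<and> dist x (cs i ! j) < ee i) \<and>
   (\<forall>j'<j. \<not> (j' < length (cs i) \<and> dist x (cs i ! j') < ee i))"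
proof
  assume "sd x i = j"
  then show "(j < length (cs i) \<and> dist x (cs i ! j) < ee i) \<and>
   (\<forall>j'<j. \<not> (j' < length (cs i) \<and> dist x (cs i ! j') < ee i))"
  proof (intro conjI allI impI)
    show "j < length (cs i)" "dist x (cs i ! j) < ee i" using sd[of x i] \<open>sd x i = j\<close> by auto
    fix j' assume "j' < j"
    then have "j' < (LEAST j. j < length (cs i) \<and> dist x (cs i ! j) < ee i)"
      using \<open>sd x i = j\<close> by (simp add: sd_def)
    then show "\<not> (j' < length (cs i) \<and> dist x (cs i ! j') < ee i)"
      by (rule not_less_Least)
  qed
next
  assume a: "(j < length (cs i) \<and> dist x (cs i ! j) < ee i) \<and>
   (\<forall>j'<j. \<not> (j' < length (cs i) \<and> dist x (cs i ! j') < ee i))"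
  show "sd x i = j" unfolding sd_def
  proof (rule Least_equality)
    show "j < length (cs i) \<and> dist x (cs i ! j) < ee i" using a by blast
    fix y assume "y < length (cs i) \<and> dist x (cs i ! y) < ee i"
    then show "j \<le> y" using a by (meson not_le)
  qed
qed

lemma sd_meas: "{x. sd x i = j} \<in> sets borel"
proof -
  define U where "U j = {x. j < length (cs i) \<and> dist x (cs i ! j) < ee i}" for j
  have oU: "open (U j)" for j
  proof (cases "j < length (cs i)")
    case True
    then have "U j = ball (cs i ! j) (ee i)" by (auto simp: U_def dist_commute)
    then show ?thesis by simp
  next
    case False
    then have "U j = {}" by (auto simp: U_def)
    then show ?thesis by simp
  qed
  have "{x. sd x i = j} = U j - (\<Union>j'<j. U j')"
    unfolding sd_eq_iff U_def by auto
  also have "\<dots> \<in> sets borel"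
    using oU by (intro sets.Diff borel_open open_UN) auto
  finally show ?thesis .
qed

lemma C_meas: "C w \<in> sets borel"
proof -
  have "C w = (\<Inter>i<length w. {x. sd x i = w!i})" unfolding C_alt by blast
  also have "\<dots> \<in> sets borel"
  proof (cases "w = []")
    case True then show ?thesis by simp
  next
    case False
    then have "{..<length w} \<noteq> {}" by auto
    then show ?thesis using sd_meas by (intro sets.finite_INT) simp_all
  qed
  finally show ?thesis .
qed

lemma C_diam: "x \<in> C w \<Longrightarrow> y \<in> C w \<Longrightarrow> length w = Suc k \<Longrightarrow> dist x y < 2 * ee k"
proof -
  assume a: "x \<in> C w" "y \<in> C w" "length w = Suc k"
  then have "sd x k = sd y k" by (auto simp: C_alt)
  then have "dist x (cs k ! sd x k) < ee k" "dist y (cs k ! sd x k) < ee k" using sd(2) by metis+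
  then show ?thesis using dist_triangle2[of x y "cs k ! sd x k"] by linarith
qed

lemma pt_C: "C w \<noteq> {} \<Longrightarrow> pt w \<in> C w"
  unfolding pt_def by (rule someI_ex) auto

lemma C_split: "C w = (\<Union>j<length (cs (length w)). C (w @ [j]))"
  using sd(1) by (auto simp: C_snoc)

lemma C_disj: "disjoint_family_on (\<lambda>j. C (w @ [j])) A"
  by (auto simp: disjoint_family_on_def C_snoc)

lemma C_bad: "C (w @ [j]) = {}" if "j \<ge> length (cs (length w))"
proof -
  { fix x assume "x \<in> C (w @ [j])"
    then have "sd x (length w) = j" by (simp add: C_snoc)
    with sd(1)[of x "length w"] that have False by simp }
  then show ?thesis by blast
qed

lemma measN_split: "measure (N n) (C w) = (\<Sum>j<length (cs (length w)). measure (N n) (C (w @ [j])))"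
proof -
  interpret prob_space "N n" by (rule probN)
  show ?thesis
  proof -
    have "measure (N n) (\<Union>j<length (cs (length w)). C (w @ [j])) = (\<Sum>j<length (cs (length w)). measure (N n) (C (w @ [j])))"
      by (rule finite_measure_finite_Union) (auto simp: setsN C_meas C_disj)
    then show ?thesis by (simp only: C_split[of w, symmetric])
  qed
qed

lemma C_Nil: "C [] = UNIV" by (simp add: C_def code_def)

lemma code_eq_C: "length w = K \<Longrightarrow> {x. code K x = w} = C w" by (auto simp: C_def)

end

lemma integral_step:
  fixes g :: "'w \<Rightarrow> real"
  assumes M: "finite_measure M" and W: "finite W" and cW: "\<And>x. x \<in> space M \<Longrightarrow> c x \<in> W"
    and meas: "\<And>w. w \<in> W \<Longrightarrow> {x\<in>space M. c x = w} \<in> sets M"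
  shows "integrable M (\<lambda>x. g (c x))"
    "(\<integral>x. g (c x) \<partial>M) = (\<Sum>w\<in>W. g w * measure M {x\<in>space M. c x = w})"
proof -
  interpret finite_measure M by (rule M)
  have eq: "g (c x) = (\<Sum>w\<in>W. g w * indicator {x\<in>space M. c x = w} x)" if "x \<in> space M" for x
  proof -
    have "(\<Sum>w\<in>W. g w * indicator {x\<in>space M. c x = w} x) = (\<Sum>w\<in>W. if w = c x then g w else 0)"
      using that by (intro sum.cong) (auto simp: indicator_def)
    also have "\<dots> = g (c x)" using cW[OF that] W by (simp add: sum.delta')
    finally show ?thesis by simp
  qed
  have int: "integrable M (\<lambda>x. (\<Sum>w\<in>W. g w * indicator {x\<in>space M. c x = w} x))"
  proof (rule Bochner_Integration.integrable_sum)
    fix w assume "w \<in> W"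
    then have "{x\<in>space M. c x = w} \<in> sets M" by (rule meas)
    then have "integrable M (indicator {x\<in>space M. c x = w} :: 'a \<Rightarrow> real)"
      by (simp add: less_top[symmetric])
    then show "integrable M (\<lambda>x. g w * indicator {x\<in>space M. c x = w} x)" by simp
  qed
  show "integrable M (\<lambda>x. g (c x))"
  proof -
    have "integrable M (\<lambda>x. g (c x)) \<longleftrightarrow> integrable M (\<lambda>x. (\<Sum>w\<in>W. g w * indicator {x\<in>space M. c x = w} x))"
      by (intro Bochner_Integration.integrable_cong) (auto simp: eq)
    then show ?thesis using int by simp
  qed
  have "(\<integral>x. g (c x) \<partial>M) = (\<integral>x. (\<Sum>w\<in>W. g w * indicator {x\<in>space M. c x = w} x) \<partial>M)"
    by (rule Bochner_Integration.integral_cong) (auto simp: eq)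
  also have "\<dots> = (\<Sum>w\<in>W. g w * measure M {x\<in>space M. c x = w})"
  proof (subst Bochner_Integration.integral_sum)
    fix w assume "w \<in> W"
    then have "{x\<in>space M. c x = w} \<in> sets M" by (rule meas)
    then have "integrable M (indicator {x\<in>space M. c x = w} :: 'a \<Rightarrow> real)"
      by (simp add: less_top[symmetric])
    then show "integrable M (\<lambda>x. g w * indicator {x\<in>space M. c x = w} x)" by simp
  next
    show "(\<Sum>w\<in>W. \<integral>x. g w * indicator {x\<in>space M. c x = w} x \<partial>M) = (\<Sum>w\<in>W. g w * measure M {x\<in>space M. c x = w})"
      by (intro sum.cong refl) (simp add: Int_absorb2)
  qed
  finally show "(\<integral>x. g (c x) \<partial>M) = (\<Sum>w\<in>W. g w * measure M {x\<in>space M. c x = w})" .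
qed

lemma tri3:
  fixes a b c z r :: real
  assumes "\<bar>a - b\<bar> < r/4" "\<bar>c - a\<bar> \<le> r/4" "\<bar>z - b\<bar> \<le> r/4"
  shows "\<bar>c - z\<bar> < r"
  using assms by linarith

lemma integral_close:
  fixes f g :: "'a \<Rightarrow> real"
  assumes "prob_space M" "integrable M f" "integrable M g" "\<And>x. x \<in> space M \<Longrightarrow> \<bar>f x - g x\<bar> \<le> e"
  shows "\<bar>(\<integral>x. f x \<partial>M) - (\<integral>x. g x \<partial>M)\<bar> \<le> e"
proof -
  interpret prob_space M by fact
  have "\<bar>(\<integral>x. f x \<partial>M) - (\<integral>x. g x \<partial>M)\<bar> = \<bar>\<integral>x. f x - g x \<partial>M\<bar>"
    using assms by (simp add: Bochner_Integration.integral_diff)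
  also have "\<dots> \<le> (\<integral>x. \<bar>f x - g x\<bar> \<partial>M)" by (rule integral_abs_bound)
  also have "\<dots> \<le> (\<integral>x. e \<partial>M)"
    using assms by (intro integral_mono) auto
  also have "\<dots> = e" by (simp add: prob_space)
  finally show ?thesis .
qed


locale cseq2 = cseq N for N :: "nat \<Rightarrow> 'c::metric_space measure" +
  fixes d :: "nat \<Rightarrow> nat"
  assumes d_mono: "strict_mono d" and d_conv: "\<And>w. convergent (\<lambda>n. measure (N (d n)) (C w))"
begin

definition lam :: "nat list \<Rightarrow> real" where
  "lam w = lim (\<lambda>n. measure (N (d n)) (C w))"

lemma lam_lim: "(\<lambda>n. measure (N (d n)) (C w)) \<longlonglongrightarrow> lam w"
  unfolding lam_def using d_conv convergent_LIMSEQ_iff by blast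

lemma lam_nonneg: "0 \<le> lam w"
  by (rule LIMSEQ_le_const[OF lam_lim]) simp

lemma spaceN: "space (N n) = UNIV"
  using sets_eq_imp_space_eq[OF setsN[of n]] by simp

lemma measN_UNIV: "measure (N n) UNIV = 1"
proof -
  interpret prob_space "N n" by (rule probN)
  show ?thesis using prob_space spaceN by simp
qed

lemma lam_Nil: "lam [] = 1"
proof -
  have "(\<lambda>n. measure (N (d n)) (C [])) = (\<lambda>n. 1)" by (simp add: C_Nil measN_UNIV)
  then have "(\<lambda>n. measure (N (d n)) (C [])) \<longlonglongrightarrow> 1" by simp
  then show ?thesis using lam_lim LIMSEQ_unique by blast
qed

lemma lam_split: "lam w = (\<Sum>j<length (cs (length w)). lam (w @ [j]))"
proof -
  have "(\<lambda>n. (\<Sum>j<length (cs (length w)). measure (N (d n)) (C (w @ [j])))) \<longlonglongrightarrow> (\<Sum>j<length (cs (length w)). lam (w @ [j]))"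
    by (intro tendsto_sum lam_lim)
  then have "(\<lambda>n. measure (N (d n)) (C w)) \<longlonglongrightarrow> (\<Sum>j<length (cs (length w)). lam (w @ [j]))"
    by (simp only: measN_split[symmetric])
  then show ?thesis using lam_lim LIMSEQ_unique by blast
qed

lemma lam_empty: "C w = {} \<Longrightarrow> lam w = 0"
proof -
  assume "C w = {}"
  then have "(\<lambda>n. measure (N (d n)) (C w)) \<longlonglongrightarrow> 0" by simp
  then show ?thesis using lam_lim LIMSEQ_unique by blast
qed

lemma lam_pos_C: "lam w > 0 \<Longrightarrow> C w \<noteq> {}"
  using lam_empty by force

definition SS :: "nat list \<Rightarrow> nat \<Rightarrow> real" where
  "SS w j = (\<Sum>j'<j. lam (w @ [j']))"

lemma SS_Suc: "SS w (Suc j) = SS w j + lam (w @ [j])"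
  by (simp add: SS_def)

lemma SS_0: "SS w 0 = 0" by (simp add: SS_def)

lemma SS_L: "SS w (length (cs (length w))) = lam w"
  by (simp add: SS_def lam_split[of w])

lemma SS_mono: "j \<le> j' \<Longrightarrow> SS w j \<le> SS w j'"
  unfolding SS_def by (rule sum_mono2) (auto simp: lam_nonneg)

definition aa :: "nat list \<Rightarrow> real" where
  "aa w = (\<Sum>i<length w. SS (take i w) (w!i))"

lemma aa_Nil: "aa [] = 0" by (simp add: aa_def)

lemma aa_snoc: "aa (w @ [j]) = aa w + SS w j"
proof -
  have "aa (w @ [j]) = (\<Sum>i<length w. SS (take i (w @ [j])) ((w @ [j])!i)) + SS (take (length w) (w @ [j])) ((w @ [j])!(length w))"
    unfolding aa_def by simp
  also have "(\<Sum>i<length w. SS (take i (w @ [j])) ((w @ [j])!i)) = aa w"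
    unfolding aa_def by (intro sum.cong refl) (simp add: nth_append)
  finally show ?thesis by simp
qed

definition dig :: "real \<Rightarrow> nat list \<Rightarrow> nat" where
  "dig t w = (LEAST j. t < aa w + SS w (Suc j))"

primrec wd :: "real \<Rightarrow> nat \<Rightarrow> nat list" where
  "wd t 0 = []"
| "wd t (Suc K) = wd t K @ [dig t (wd t K)]"

lemma length_wd[simp]: "length (wd t K) = K"
  by (induction K) auto

lemma dig_props:
  assumes "aa w \<le> t" "t < aa w + lam w"
  shows "dig t w < length (cs (length w))" "aa w + SS w (dig t w) \<le> t" "t < aa w + SS w (Suc (dig t w))"
proof -
  let ?L = "length (cs (length w))"
  have Lp: "?L > 0" by (rule L_pos)
  have ex: "t < aa w + SS w (Suc (?L - 1))"
    using assms Lp SS_L[of w] by simp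
  show t1: "t < aa w + SS w (Suc (dig t w))"
    unfolding dig_def by (rule LeastI[of _ "?L - 1"]) (rule ex)
  have "dig t w \<le> ?L - 1" unfolding dig_def by (rule Least_le) (rule ex)
  then show "dig t w < ?L" using Lp by linarith
  show "aa w + SS w (dig t w) \<le> t"
  proof (cases "dig t w")
    case 0 then show ?thesis using assms SS_0 by simp
  next
    case (Suc j)
    then have "j < (LEAST j. t < aa w + SS w (Suc j))" by (simp add: dig_def)
    then have "\<not> t < aa w + SS w (Suc j)" by (rule not_less_Least)
    then show ?thesis using Suc by simp
  qed
qed

lemma wd_inv:
  assumes t: "t \<in> {0..<1}"
  shows "aa (wd t K) \<le> t \<and> t < aa (wd t K) + lam (wd t K) \<and> wd t K \<in> Wd (\<lambda>i. length (cs i)) K"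
proof (induction K)
  case 0 then show ?case using t by (simp add: aa_Nil lam_Nil Wd_def)
next
  case (Suc K)
  let ?w = "wd t K"
  have a: "aa ?w \<le> t" "t < aa ?w + lam ?w" and W: "?w \<in> Wd (\<lambda>i. length (cs i)) K" using Suc by auto
  note dp = dig_props[OF a]
  have 1: "aa (wd t (Suc K)) \<le> t" using dp(2) by (simp add: aa_snoc)
  have 2: "t < aa (wd t (Suc K)) + lam (wd t (Suc K))" using dp(3) by (simp add: aa_snoc SS_Suc)
  have 3: "wd t (Suc K) \<in> Wd (\<lambda>i. length (cs i)) (Suc K)"
    using W dp(1) by (auto simp: Wd_def nth_append less_Suc_eq)
  show ?case using 1 2 3 by blast
qed

lemma wd_set:
  assumes "length w = K"
  shows "{t\<in>{0..<1}. wd t K = w} = {aa w..<aa w + lam w}"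
  using assms
proof (induction K arbitrary: w)
  case 0 then show ?case by (simp add: aa_Nil lam_Nil set_eq_iff)
next
  case (Suc K)
  have "\<exists>j v. w = v @ [j] \<and> length v = K" using Suc.prems by (simp add: length_Suc_conv_rev)
  then obtain v j where w: "w = v @ [j]" and lv: "length v = K" by blast
  note IH = Suc.IH[OF lv]
  show ?case
  proof (intro set_eqI iffI)
    fix t assume a: "t \<in> {t\<in>{0..<1}. wd t (Suc K) = w}"
    then have t: "t \<in> {0..<1}" by blast
    have "wd t (Suc K) = w" using a by blast
    then have e0: "wd t K @ [dig t (wd t K)] = v @ [j]" unfolding w by (simp only: wd.simps)
    then have e0': "wd t K = v \<and> dig t (wd t K) = j" by (rule append1_eq_conv[THEN iffD1])
    then have e1: "wd t K = v" by (rule conjunct1)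
    have e2: "dig t v = j" using e0' unfolding e1 by (rule conjunct2)
    note e = e1 e2
    have "aa v \<le> t" "t < aa v + lam v" using wd_inv[OF t, of K] e by auto
    note dp = dig_props[OF this]
    show "t \<in> {aa w..<aa w + lam w}"
      using dp(2,3) e by (simp add: w aa_snoc SS_Suc)
  next
    fix t assume "t \<in> {aa w..<aa w + lam w}"
    then have t1: "aa v + SS v j \<le> t" "t < aa v + SS v (Suc j)" by (simp_all add: w aa_snoc SS_Suc)
    then have lpos: "lam (v @ [j]) > 0" using SS_Suc[of v j] by linarith
    have jL: "j < length (cs (length v))"
    proof (rule ccontr)
      assume "\<not> j < length (cs (length v))"
      then have "C (v @ [j]) = {}" by (intro C_bad) simp
      then show False using lpos lam_empty by simp
    qed
    have "SS v (Suc j) \<le> lam v" using SS_mono[of "Suc j" "length (cs (length v))" v] jL SS_L[of v] by simp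
    moreover have "0 \<le> SS v j" using SS_mono[of 0 j v] SS_0 by simp
    ultimately have "t \<in> {aa v..<aa v + lam v}" using t1 by simp
    then have "t \<in> {t\<in>{0..<1}. wd t K = v}" by (simp only: IH)
    then have t: "t \<in> {0..<1}" and e: "wd t K = v" by blast+
    have "dig t v = j" unfolding dig_def
    proof (rule Least_equality)
      show "t < aa v + SS v (Suc j)" by (rule t1(2))
      fix y assume y: "t < aa v + SS v (Suc y)"
      show "j \<le> y"
      proof (rule ccontr)
        assume "\<not> j \<le> y"
        then have "SS v (Suc y) \<le> SS v j" by (intro SS_mono) simp
        then show False using y t1(1) by simp
      qed
    qed
    then show "t \<in> {t\<in>{0..<1}. wd t (Suc K) = w}" using t e w by (simp del: atLeastLessThan_iff)
  qed
qed


lemma wd_meas: "(\<lambda>t. wd t K) \<in> measurable borel (count_space UNIV)"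
proof (induction K)
  case 0 then show ?case by simp
next
  case (Suc K)
  have "(\<lambda>t. (\<lambda>v t. v @ [dig t v]) (wd t K) t) \<in> measurable borel (count_space UNIV)"
  proof (rule measurable_compose_countable[OF _ Suc.IH])
    fix v :: "nat list"
    have "(\<lambda>t. dig t v) \<in> measurable borel (count_space UNIV)"
      unfolding dig_def
    proof (intro measurable_Least)
      fix j
      have "{t\<in>space borel. t < aa v + SS v (Suc j)} \<in> sets borel"
        using borel_open[OF open_lessThan[of "aa v + SS v (Suc j)"]] by (simp add: lessThan_def)
      then show "(\<lambda>t. t < aa v + SS v (Suc j)) \<in> measurable borel (count_space UNIV)"
        by (simp only: pred_def[symmetric])
    qed
    then show "(\<lambda>t. v @ [dig t v]) \<in> measurable borel (count_space UNIV)"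
      by (rule measurable_compose) (simp add: measurable_count_space_eq1)
  qed
  then show ?case by simp
qed

definition M01 :: "real measure" where "M01 = restrict_space lborel {0..<1}"

lemma space_M01: "space M01 = {0..<1}" by (simp add: M01_def)

lemma sets_M01_le: "A \<in> sets borel \<Longrightarrow> A \<inter> {0..<1} \<in> sets M01"
  by (simp add: M01_def sets_restrict_space_iff)

lemma prob_M01: "prob_space M01"
proof
  show "emeasure M01 (space M01) = 1"
    by (simp add: M01_def emeasure_restrict_space space_restrict_space)
qed

lemma meas_M01: "f \<in> measurable borel MM \<Longrightarrow> f \<in> measurable M01 MM"
  unfolding M01_def by (rule measurable_restrict_space1) simp

lemma wd_meas_M01: "{t\<in>space M01. wd t K = w} \<in> sets M01"
proof -
  have "(\<lambda>t. wd t K) \<in> measurable M01 (count_space UNIV)" by (rule meas_M01[OF wd_meas])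
  then show ?thesis by (simp add: measurable_count_space_eq2)
qed

lemma wd_measure: "length w = K \<Longrightarrow> measure M01 {t\<in>space M01. wd t K = w} = lam w"
proof -
  assume "length w = K"
  then have e: "{t\<in>space M01. wd t K = w} = {aa w..<aa w + lam w}"
    using wd_set[of w K] by (simp add: space_M01)
  have sub: "{aa w..<aa w + lam w} \<subseteq> {0..<1}" using wd_set[of w K] \<open>length w = K\<close> by blast
  have "measure M01 {aa w..<aa w + lam w} = measure lborel {aa w..<aa w + lam w}"
    unfolding M01_def by (rule measure_restrict_space) (use sub in auto)
  also have "\<dots> = lam w" using lam_nonneg[of w] by simp
  finally show ?thesis using e by simp
qed

definition QK :: "nat \<Rightarrow> real \<Rightarrow> 'c" where "QK K t = pt (wd t K)"

lemma QK_C: "t \<in> {0..<1} \<Longrightarrow> QK K t \<in> C (wd t K)"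
proof -
  assume t: "t \<in> {0..<1}"
  then have "lam (wd t K) > 0" using wd_inv[OF t, of K] by linarith
  then have "C (wd t K) \<noteq> {}" by (rule lam_pos_C)
  then show ?thesis unfolding QK_def by (rule pt_C)
qed

lemma C_wd_mono: "K \<le> K' \<Longrightarrow> C (wd t K') \<subseteq> C (wd t K)"
proof (induction K' rule: dec_induct)
  case base then show ?case by simp
next
  case (step n)
  have "C (wd t (Suc n)) \<subseteq> C (wd t n)" by (auto simp: C_snoc)
  then show ?case using step.IH by blast
qed

lemma QK_close: "t \<in> {0..<1} \<Longrightarrow> Suc K \<le> m \<Longrightarrow> Suc K \<le> n \<Longrightarrow> dist (QK m t) (QK n t) < 2 * ee K"
proof -
  assume t: "t \<in> {0..<1}" and m: "Suc K \<le> m" and n: "Suc K \<le> n"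
  have "QK m t \<in> C (wd t (Suc K))" using QK_C[OF t, of m] C_wd_mono[OF m, of t] by blast
  moreover have "QK n t \<in> C (wd t (Suc K))" using QK_C[OF t, of n] C_wd_mono[OF n, of t] by blast
  ultimately show ?thesis by (rule C_diam) simp
qed

lemma ee_small: "e > 0 \<Longrightarrow> \<exists>K. 2 * ee K < e"
proof -
  assume "e > 0"
  then obtain K where "inverse (real (Suc K)) < e / 2" using reals_Archimedean[of "e/2"] by auto
  moreover have "ee K = inverse (real (Suc K))" by (simp add: ee_def inverse_eq_divide)
  ultimately show ?thesis by (intro exI[of _ K]) linarith
qed

definition Q :: "real \<Rightarrow> 'c" where "Q t = lim (\<lambda>K. QK K t)"

lemma QK_lim: "t \<in> {0..<1} \<Longrightarrow> (\<lambda>K. QK K t) \<longlonglongrightarrow> Q t"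
proof -
  assume t: "t \<in> {0..<1}"
  have "Cauchy (\<lambda>K. QK K t)"
  proof (rule metric_CauchyI)
    fix e :: real assume "e > 0"
    then obtain K where "2 * ee K < e" using ee_small by blast
    then show "\<exists>M. \<forall>m\<ge>M. \<forall>n\<ge>M. dist (QK m t) (QK n t) < e"
    proof (intro exI[of _ "Suc K"] allI impI)
      fix m n assume "Suc K \<le> m" "Suc K \<le> n"
      then have "dist (QK m t) (QK n t) < 2 * ee K" by (rule QK_close[OF t])
      then show "dist (QK m t) (QK n t) < e" using \<open>2 * ee K < e\<close> by linarith
    qed
  qed
  moreover note compact_imp_complete[OF cpt, unfolded complete_def]
  ultimately obtain l where "(\<lambda>K. QK K t) \<longlonglongrightarrow> l" by blast
  then show ?thesis unfolding Q_def by (simp add: limI)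
qed

lemma Q_close: "t \<in> {0..<1} \<Longrightarrow> dist (Q t) (QK (Suc K) t) \<le> 2 * ee K"
proof -
  assume t: "t \<in> {0..<1}"
  have "(\<lambda>m. dist (QK m t) (QK (Suc K) t)) \<longlonglongrightarrow> dist (Q t) (QK (Suc K) t)"
    by (intro tendsto_intros QK_lim[OF t])
  moreover have "\<forall>m\<ge>Suc K. dist (QK m t) (QK (Suc K) t) \<le> 2 * ee K"
    using QK_close[OF t] by (simp add: less_imp_le)
  ultimately show ?thesis by (intro LIMSEQ_le_const2) auto
qed

lemma QK_meas: "QK K \<in> measurable M01 borel"
proof -
  have "(\<lambda>t. pt (wd t K)) \<in> measurable M01 borel"
    by (rule measurable_compose[OF meas_M01[OF wd_meas]]) (simp add: measurable_count_space_eq1)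
  then show ?thesis by (simp add: QK_def[abs_def])
qed

lemma Q_meas: "Q \<in> measurable M01 borel"
proof (rule borel_measurable_LIMSEQ_metric[where f=QK])
  show "\<And>i. QK i \<in> borel_measurable M01" by (rule QK_meas)
  fix x assume "x \<in> space M01"
  then show "(\<lambda>i. QK i x) \<longlonglongrightarrow> Q x" using QK_lim by (simp add: space_M01)
qed

definition nu :: "'c measure" where "nu = distr M01 borel Q"

lemma nu_prob: "prob_space nu"
  unfolding nu_def by (intro prob_space.prob_space_distr prob_M01 Q_meas)

lemma nu_sets: "sets nu = sets borel" by (simp add: nu_def)


theorem nu_conv:
  fixes f :: "'c \<Rightarrow> real"
  assumes cont: "continuous_on UNIV f"
  shows "(\<lambda>n. \<integral>x. f x \<partial>N (d n)) \<longlonglongrightarrow> (\<integral>x. f x \<partial>nu)"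
proof -
  have fm: "f \<in> borel_measurable borel" by (rule borel_measurable_continuous_onI[OF cont])
  have "compact (f ` UNIV)" by (rule compact_continuous_image[OF cont cpt])
  then obtain B where B: "\<And>x. \<bar>f x\<bar> \<le> B"
    using compact_imp_bounded[of "f ` UNIV"] unfolding bounded_iff by auto
  have uc: "uniformly_continuous_on UNIV f" by (rule compact_uniformly_continuous[OF cont cpt])
  have intN: "integrable (N n) g" if "g \<in> borel_measurable borel" "\<And>x. \<bar>g x\<bar> \<le> B" for n and g :: "'c \<Rightarrow> real"
  proof -
    interpret prob_space "N n" by (rule probN)
    have "g \<in> borel_measurable (N n)" using that(1) measurable_cong_sets[OF setsN refl] by blast
    then show ?thesis using that(2) by (intro integrable_const_bound[where B=B]) auto
  qed
  have intM: "integrable M01 g" if "g \<in> borel_measurable M01" "\<And>x. \<bar>g x\<bar> \<le> B" for g :: "real \<Rightarrow> real"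
  proof -
    interpret prob_space M01 by (rule prob_M01)
    show ?thesis using that by (intro integrable_const_bound[where B=B]) auto
  qed
  have I: "(\<integral>x. f x \<partial>nu) = (\<integral>t. f (Q t) \<partial>M01)"
    unfolding nu_def by (rule integral_distr[OF Q_meas fm])
  show ?thesis
  proof (rule LIMSEQ_I)
    fix r :: real assume r: "0 < r"
    define e where "e = r / 4"
    have e: "e > 0" using r by (simp add: e_def)
    obtain \<delta> where \<delta>: "\<delta> > 0" and f\<delta>: "\<And>x x'. dist x' x < \<delta> \<Longrightarrow> dist (f x') (f x) < e"
      using uc e unfolding uniformly_continuous_on_def by blast
    obtain K where K: "2 * ee K < \<delta>" using ee_small[OF \<delta>] by blast
    define WW where "WW = Wd (\<lambda>i. length (cs i)) (Suc K)"
    have fWW: "finite WW" unfolding WW_def by (rule finite_Wd)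
    have lenWW: "length w = Suc K" if "w \<in> WW" for w using that by (simp add: WW_def Wd_def)
    define SN where "SN n = (\<Sum>w\<in>WW. f (pt w) * measure (N n) (C w))" for n
    define SL where "SL = (\<Sum>w\<in>WW. f (pt w) * lam w)"
    have step1: "\<bar>(\<integral>x. f x \<partial>N n) - SN n\<bar> \<le> e" for n
    proof -
      interpret prob_space "N n" by (rule probN)
      have cW: "code (Suc K) x \<in> WW" for x unfolding WW_def by (rule code_W)
      have setC: "{x\<in>space (N n). code (Suc K) x = w} = C w" if "w \<in> WW" for w
        using code_eq_C[OF lenWW[OF that]] by (simp add: spaceN)
      have mC: "{x\<in>space (N n). code (Suc K) x = w} \<in> sets (N n)" if "w \<in> WW" for w
        using setC[OF that] C_meas[of w] setsN[of n] by simp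
      note st = integral_step[OF finite_measure_axioms fWW cW mC, of "\<lambda>w. f (pt w)"]
      have "SN n = (\<Sum>w\<in>WW. f (pt w) * measure (N n) {x\<in>space (N n). code (Suc K) x = w})"
        unfolding SN_def by (intro sum.cong refl) (simp add: setC)
      also have "\<dots> = (\<integral>x. f (pt (code (Suc K) x)) \<partial>N n)" by (rule st(2)[symmetric])
      finally have "SN n = (\<integral>x. f (pt (code (Suc K) x)) \<partial>N n)" .
      moreover have "\<bar>(\<integral>x. f x \<partial>N n) - (\<integral>x. f (pt (code (Suc K) x)) \<partial>N n)\<bar> \<le> e"
      proof (rule integral_close[OF probN intN[OF fm B] st(1)])
        fix x
        have "x \<in> C (code (Suc K) x)" by (rule C_code)
        moreover have "pt (code (Suc K) x) \<in> C (code (Suc K) x)" by (rule pt_C) (use C_code in blast)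
        ultimately have "dist (pt (code (Suc K) x)) x < 2 * ee K"
          using C_diam[of "pt (code (Suc K) x)" "code (Suc K) x" x K] length_code[of "Suc K" x] by blast
        then have "dist (f (pt (code (Suc K) x))) (f x) < e" using K by (intro f\<delta>) simp
        then show "\<bar>f x - f (pt (code (Suc K) x))\<bar> \<le> e" by (simp add: dist_real_def abs_minus_commute)
      qed
      ultimately show ?thesis by simp
    qed
    have step2: "\<bar>(\<integral>x. f x \<partial>nu) - SL\<bar> \<le> e"
    proof -
      interpret prob_space M01 by (rule prob_M01)
      have cW: "wd t (Suc K) \<in> WW" if "t \<in> space M01" for t
        using wd_inv[of t "Suc K"] that unfolding WW_def space_M01 by blast
      note st = integral_step[OF finite_measure_axioms fWW cW wd_meas_M01, of "\<lambda>w. f (pt w)"]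
      have "SL = (\<Sum>w\<in>WW. f (pt w) * measure M01 {t\<in>space M01. wd t (Suc K) = w})"
        unfolding SL_def by (intro sum.cong refl) (simp only: wd_measure lenWW)
      also have "\<dots> = (\<integral>t. f (pt (wd t (Suc K))) \<partial>M01)" by (rule st(2)[symmetric])
      finally have "SL = (\<integral>t. f (pt (wd t (Suc K))) \<partial>M01)" .
      moreover have "\<bar>(\<integral>t. f (Q t) \<partial>M01) - (\<integral>t. f (pt (wd t (Suc K))) \<partial>M01)\<bar> \<le> e"
      proof (rule integral_close[OF prob_M01 intM st(1)])
        show "(\<lambda>t. f (Q t)) \<in> borel_measurable M01" by (rule measurable_compose[OF Q_meas fm])
        show "\<bar>f (Q t)\<bar> \<le> B" for t by (rule B)
        fix t assume "t \<in> space M01"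
        then have "dist (Q t) (QK (Suc K) t) \<le> 2 * ee K" by (intro Q_close) (simp add: space_M01)
        then have "dist (QK (Suc K) t) (Q t) < \<delta>" using K by (simp add: dist_commute)
        then have "dist (f (QK (Suc K) t)) (f (Q t)) < e" by (rule f\<delta>)
        then show "\<bar>f (Q t) - f (pt (wd t (Suc K)))\<bar> \<le> e" by (simp add: dist_real_def QK_def abs_minus_commute)
      qed
      ultimately show ?thesis using I by simp
    qed
    have "(\<lambda>n. SN (d n)) \<longlonglongrightarrow> SL"
      unfolding SN_def SL_def by (intro tendsto_sum tendsto_mult_left lam_lim)
    then obtain no where no: "\<And>n. n \<ge> no \<Longrightarrow> \<bar>SN (d n) - SL\<bar> < e"
      using e by (auto simp: LIMSEQ_iff)
    show "\<exists>no. \<forall>n\<ge>no. norm ((\<integral>x. f x \<partial>N (d n)) - (\<integral>x. f x \<partial>nu)) < r"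
    proof (intro exI allI impI)
      fix n assume "n \<ge> no"
      then have "\<bar>SN (d n) - SL\<bar> < e" by (rule no)
      moreover note step1[of "d n"] step2
      ultimately show "norm ((\<integral>x. f x \<partial>N (d n)) - (\<integral>x. f x \<partial>nu)) < r"
        unfolding e_def real_norm_def by (rule tri3)
    qed
  qed
qed

end

lemma diag_conv:
  fixes a :: "nat \<Rightarrow> nat \<Rightarrow> real"
  assumes bdd: "\<And>n i. \<bar>a n i\<bar> \<le> M"
  shows "\<exists>d. strict_mono d \<and> (\<forall>i. convergent (\<lambda>k. a (d k) i))"
proof -
  let ?P = "\<lambda>n. \<lambda>s. convergent (\<lambda>k. a (s k) n)"
  interpret nat: subseqs ?P
  proof (unfold convergent_def, unfold subseqs_def, auto)
    fix n :: nat and s :: "nat \<Rightarrow> nat" assume s: "strict_mono s"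
    have "bounded {-M..M}"
      using bounded_closed_interval by auto
    moreover have "\<And>k. a (s k) n \<in> {-M..M}"
      using bdd by (simp add: abs_le_iff minus_le_iff)
    ultimately have "\<exists>l s'. strict_mono s' \<and> ((\<lambda>k. a (s k) n) \<circ> s') \<longlonglongrightarrow> l"
      using compact_Icc compact_imp_seq_compact seq_compactE by metis
    thus "\<exists>s'. strict_mono (s'::nat\<Rightarrow>nat) \<and> (\<exists>l. (\<lambda>k. a (s (s' k)) n) \<longlonglongrightarrow> l)"
      by (auto simp: comp_def)
  qed
  define d where "d = nat.diagseq"
  have subseq: "strict_mono d"
    unfolding d_def using nat.subseq_diagseq by auto
  have rat_cnv: "?P n d" for n
  proof -
    have Pn_seqseq: "?P n (nat.seqseq (Suc n))"
      by (rule nat.seqseq_holds)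
    have 1: "(\<lambda>k. a ((nat.seqseq (Suc n) \<circ> (\<lambda>k. nat.fold_reduce (Suc n) k
      (Suc n + k))) k) n) = (\<lambda>k. a (nat.seqseq (Suc n) k) n) \<circ>
      (\<lambda>k. nat.fold_reduce (Suc n) k (Suc n + k))"
      by auto
    have 2: "?P n (d \<circ> ((+) (Suc n)))"
      unfolding d_def nat.diagseq_seqseq 1
      by (intro convergent_subseq_convergent Pn_seqseq nat.subseq_diagonal_rest)
    then obtain L where 3: "(\<lambda>na. a (d (na + Suc n)) n) \<longlonglongrightarrow> L"
      by (auto simp: add.commute dest: convergentD)
    then have "(\<lambda>k. a (d k) n) \<longlonglongrightarrow> L"
      by (rule LIMSEQ_offset)
    then show ?thesis
      by (auto simp: convergent_def)
  qed
  show ?thesis using subseq rat_cnv by blast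
qed

theorem prob_seq_compact:
  fixes N :: "nat \<Rightarrow> 'c::metric_space measure"
  assumes cpt: "compact (UNIV::'c set)" and pr: "\<And>n. prob_space (N n)" and st: "\<And>n. sets (N n) = sets borel"
  shows "\<exists>d \<nu>. strict_mono d \<and> prob_space \<nu> \<and> sets \<nu> = sets borel \<and>
    (\<forall>f::'c\<Rightarrow>real. continuous_on UNIV f \<longrightarrow> (\<lambda>n. \<integral>x. f x \<partial>N (d n)) \<longlonglongrightarrow> (\<integral>x. f x \<partial>\<nu>))"
proof -
  interpret cseq N by (rule cseq.intro[OF cpt pr st])
  have "\<bar>measure (N n) (C (from_nat i))\<bar> \<le> 1" for n i
  proof -
    interpret prob_space "N n" by (rule pr)
    show ?thesis by simp
  qed
  then obtain d where d: "strict_mono d" "\<And>i. convergent (\<lambda>k. measure (N (d k)) (C (from_nat i)))"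
    using diag_conv[of "\<lambda>n i. measure (N n) (C (from_nat i))" 1] by blast
  have cv: "convergent (\<lambda>k. measure (N (d k)) (C w))" for w
    using d(2)[of "to_nat w"] by simp
  interpret cseq2 N d by (rule cseq2.intro[OF cseq_axioms cseq2_axioms.intro[OF d(1) cv]])
  show ?thesis using d(1) nu_prob nu_sets nu_conv by blast
qed

lemma cont_bound:
  fixes h :: "'c::metric_space \<Rightarrow> real"
  assumes "compact (UNIV :: 'c set)" "continuous_on UNIV h"
  shows "\<exists>B. \<forall>x. \<bar>h x\<bar> \<le> B"
proof -
  have "compact (h ` UNIV)" by (rule compact_continuous_image[OF assms(2,1)])
  then show ?thesis using compact_imp_bounded[of "h ` UNIV"] unfolding bounded_iff by auto
qed

lemma cont_integrable:
  fixes h :: "'c::metric_space \<Rightarrow> real"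
  assumes "compact (UNIV :: 'c set)" "continuous_on UNIV h" "prob_space M" "sets M = sets borel"
  shows "integrable M h"
proof -
  interpret prob_space M by fact
  obtain B where B: "\<And>x. \<bar>h x\<bar> \<le> B" using cont_bound[OF assms(1,2)] by blast
  have "h \<in> borel_measurable borel" by (rule borel_measurable_continuous_onI[OF assms(2)])
  then have "h \<in> borel_measurable M" using measurable_cong_sets[OF assms(4) refl] by blast
  then show ?thesis using B by (intro integrable_const_bound[where B=B]) auto
qed

lemma cont_min:
  fixes h :: "'c::metric_space \<Rightarrow> real"
  assumes "compact (UNIV :: 'c set)" "continuous_on UNIV h" "\<And>x. h x > 0"
  shows "\<exists>m>0. \<forall>x. m \<le> h x"
proof -
  obtain x0 where "\<forall>y. h x0 \<le> h y"
    using continuous_attains_inf[OF assms(1) _ assms(2)] by auto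
  then show ?thesis using assms(3)[of x0] by blast
qed

locale mainset =
  fixes \<tau> :: "'b::metric_space \<Rightarrow> 'a::metric_space \<Rightarrow> 'a" and \<mu> :: "'b measure" and \<psi> :: "'a \<Rightarrow> real"
  assumes cA: "compact (UNIV :: 'a set)" and cB: "compact (UNIV :: 'b set)"
    and ct: "continuous_on UNIV (\<lambda>(\<theta>, x). \<tau> \<theta> x)"
    and pm: "prob_space \<mu>" and sm: "sets \<mu> = sets borel"
    and cpsi: "continuous_on UNIV \<psi>" and ppsi: "\<forall>x. \<psi> x > 0"
begin

lemma cBA: "compact (UNIV :: ('b \<times> 'a) set)"
  using compact_Times[OF cB cA] by simp

lemma cAB: "compact (UNIV :: ('a \<times> 'b) set)"
  using compact_Times[OF cA cB] by simp

lemma tcont: "continuous_on UNIV (\<lambda>p::'b\<times>'a. \<tau> (fst p) (snd p))"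
  using ct by (simp add: case_prod_beta)

lemma tcont2: "continuous_on UNIV (\<lambda>\<omega>::'a\<times>'b. \<tau> (snd \<omega>) (fst \<omega>))"
proof -
  have "continuous_on UNIV ((\<lambda>p::'b\<times>'a. \<tau> (fst p) (snd p)) \<circ> (\<lambda>\<omega>::'a\<times>'b. (snd \<omega>, fst \<omega>)))"
    by (rule continuous_on_compose[OF _ continuous_on_subset[OF tcont]]) (auto intro!: continuous_intros)
  then show ?thesis by (simp add: o_def)
qed

lemma tcont_th: "continuous_on UNIV (\<lambda>\<theta>. \<tau> \<theta> x)"
proof -
  have "continuous_on UNIV ((\<lambda>p::'b\<times>'a. \<tau> (fst p) (snd p)) \<circ> (\<lambda>\<theta>. (\<theta>, x)))"
    by (rule continuous_on_compose[OF _ continuous_on_subset[OF tcont]]) (auto intro!: continuous_intros)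
  then show ?thesis by (simp add: o_def)
qed

lemma meas_mu: "continuous_on UNIV h \<Longrightarrow> h \<in> borel_measurable \<mu>"
  using borel_measurable_continuous_onI measurable_cong_sets[OF sm refl] by blast

lemma int_mu: "continuous_on UNIV (g :: 'a \<Rightarrow> real) \<Longrightarrow> integrable \<mu> (\<lambda>\<theta>. g (\<tau> \<theta> x))"
  by (rule cont_integrable[OF cB _ pm sm]) (rule continuous_on_compose2[OF _ tcont_th], auto)

lemma Bmu_cont:
  assumes g: "continuous_on UNIV (g :: 'a \<Rightarrow> real)"
  shows "continuous_on UNIV (B_mu \<mu> \<tau> g)"
proof -
  have G: "continuous_on UNIV (\<lambda>p::'b\<times>'a. g (\<tau> (fst p) (snd p)))"
    by (rule continuous_on_compose2[OF g tcont]) auto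
  have uc: "uniformly_continuous_on UNIV (\<lambda>p::'b\<times>'a. g (\<tau> (fst p) (snd p)))"
    by (rule compact_uniformly_continuous[OF G cBA])
  show ?thesis unfolding continuous_on_iff
  proof (intro ballI allI impI)
    fix x :: 'a and e :: real assume e: "e > 0"
    obtain \<delta> where \<delta>: "\<delta> > 0" and u: "\<And>p p'. dist p' p < \<delta> \<Longrightarrow> dist (g (\<tau> (fst p') (snd p'))) (g (\<tau> (fst p) (snd p))) < e / 2"
      using uc e unfolding uniformly_continuous_on_def by (meson half_gt_zero UNIV_I)
    show "\<exists>d>0. \<forall>x'\<in>UNIV. dist x' x < d \<longrightarrow> dist (B_mu \<mu> \<tau> g x') (B_mu \<mu> \<tau> g x) < e"
    proof (intro exI[of _ \<delta>] conjI ballI impI)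
      fix x' assume "dist x' x < \<delta>"
      then have d: "dist (\<theta>, x') (\<theta>, x) < \<delta>" for \<theta> :: 'b by (simp add: dist_Pair_Pair)
      have "\<bar>g (\<tau> \<theta> x') - g (\<tau> \<theta> x)\<bar> \<le> e / 2" for \<theta> :: 'b
      proof -
        have "dist (g (\<tau> \<theta> x')) (g (\<tau> \<theta> x)) < e / 2" using u[OF d[of \<theta>]] by simp
        then show ?thesis by (simp add: dist_real_def)
      qed
      then have "\<bar>B_mu \<mu> \<tau> g x' - B_mu \<mu> \<tau> g x\<bar> \<le> e / 2"
        unfolding B_mu_def by (intro integral_close[OF pm int_mu[OF g] int_mu[OF g]])
      then show "dist (B_mu \<mu> \<tau> g x') (B_mu \<mu> \<tau> g x) < e" using e by (simp add: dist_real_def)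
    qed (rule \<delta>)
  qed
qed

lemma Bmu_pos:
  assumes g: "continuous_on UNIV (g :: 'a \<Rightarrow> real)" and gp: "\<And>x. g x > 0"
  shows "B_mu \<mu> \<tau> g x > 0"
proof -
  interpret prob_space \<mu> by (rule pm)
  obtain m where m: "m > 0" "\<And>y. m \<le> g y" using cont_min[OF cA g gp] by blast
  have "(\<integral>\<theta>. m \<partial>\<mu>) \<le> (\<integral>\<theta>. g (\<tau> \<theta> x) \<partial>\<mu>)"
    by (intro integral_mono int_mu[OF g]) (auto simp: m)
  then show ?thesis using m by (simp add: B_mu_def prob_space)
qed

lemma Bq_eq:
  assumes g: "continuous_on UNIV (g :: 'a \<Rightarrow> real)"
  shows "B_q \<mu> \<tau> \<psi> g x = B_mu \<mu> \<tau> (\<lambda>y. g y * \<psi> y) x"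
proof -
  have m1: "(\<lambda>\<theta>. g (\<tau> \<theta> x)) \<in> borel_measurable \<mu>"
    by (rule meas_mu, rule continuous_on_compose2[OF g tcont_th]) auto
  have m2: "(\<lambda>\<theta>. \<psi> (\<tau> \<theta> x)) \<in> borel_measurable \<mu>"
    by (rule meas_mu, rule continuous_on_compose2[OF cpsi tcont_th]) auto
  have "B_q \<mu> \<tau> \<psi> g x = (\<integral>\<theta>. \<psi> (\<tau> \<theta> x) *\<^sub>R g (\<tau> \<theta> x) \<partial>\<mu>)"
    unfolding B_q_def q_meas_def by (rule integral_density[OF m1 m2]) (simp add: less_imp_le ppsi)
  then show ?thesis by (simp add: B_mu_def mult.commute)
qed

definition phi :: "('a \<Rightarrow> real) \<Rightarrow> 'a \<Rightarrow> real" where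
  "phi g x = ln (B_q \<mu> \<tau> \<psi> g x / g x)"

lemma phi_cont:
  assumes "g \<in> pos_cont_funs"
  shows "continuous_on UNIV (phi g)"
proof -
  have g: "continuous_on UNIV g" and gp: "\<And>x. g x > 0" using assms by (auto simp: pos_cont_funs_def)
  have gps: "continuous_on UNIV (\<lambda>y. g y * \<psi> y)" by (intro continuous_intros g cpsi)
  have gpp: "\<And>y. g y * \<psi> y > 0" using gp ppsi by simp
  have e: "phi g = (\<lambda>x. ln (B_mu \<mu> \<tau> (\<lambda>y. g y * \<psi> y) x / g x))"
    by (simp add: phi_def[abs_def] Bq_eq[OF g])
  have ne1: "\<forall>x\<in>UNIV. g x \<noteq> 0" using gp by (metis less_irrefl)
  have ne2: "\<forall>x\<in>UNIV. B_mu \<mu> \<tau> (\<lambda>y. g y * \<psi> y) x / g x \<noteq> 0"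
    using Bmu_pos[OF gps gpp] ne1 by (metis divide_eq_0_iff less_irrefl)
  show ?thesis unfolding e
    by (intro continuous_on_ln continuous_on_divide Bmu_cont[OF gps] g ne1 ne2)
qed

lemma marg_facts:
  fixes \<nu> :: "('a \<times> 'b) measure"
  assumes "prob_space \<nu>" "sets \<nu> = sets borel"
  shows "prob_space (marg \<nu>)" "sets (marg \<nu>) = sets borel"
    "\<And>h::'a \<Rightarrow> real. continuous_on UNIV h \<Longrightarrow> (\<integral>x. h x \<partial>marg \<nu>) = (\<integral>\<omega>. h (fst \<omega>) \<partial>\<nu>)"
proof -
  have "continuous_on UNIV (\<lambda>x::'a\<times>'b. fst x)" by (intro continuous_intros)
  then have "(\<lambda>x::'a\<times>'b. fst x) \<in> measurable borel (borel :: 'a measure)"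
    by (rule borel_measurable_continuous_onI)
  then have fm: "fst \<in> measurable \<nu> (borel :: 'a measure)"
    by (subst measurable_cong_sets[OF assms(2) refl]) simp
  show "prob_space (marg \<nu>)" unfolding marg_def by (rule prob_space.prob_space_distr[OF assms(1) fm])
  show "sets (marg \<nu>) = sets borel" by (simp add: marg_def)
  fix h :: "'a \<Rightarrow> real" assume "continuous_on UNIV h"
  then have "h \<in> borel_measurable borel" by (rule borel_measurable_continuous_onI)
  then show "(\<integral>x. h x \<partial>marg \<nu>) = (\<integral>\<omega>. h (fst \<omega>) \<partial>\<nu>)" unfolding marg_def by (rule integral_distr[OF fm])
qed

end

lemma INF_plus_ereal: "(INF i\<in>I. f i + ereal c) = (INF i\<in>I. f i) + ereal (c::real)"
proof (rule antisym)
  show "(INF i\<in>I. f i) + ereal c \<le> (INF i\<in>I. f i + ereal c)"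
    by (intro INF_greatest add_right_mono INF_lower)
  have "(INF i\<in>I. f i + ereal c) - ereal c \<le> f i" if "i \<in> I" for i
  proof -
    have "(INF i\<in>I. f i + ereal c) \<le> f i + ereal c" using that by (rule INF_lower)
    then show ?thesis by (simp add: ereal_minus_le_iff)
  qed
  then have "(INF i\<in>I. f i + ereal c) - ereal c \<le> (INF i\<in>I. f i)" by (rule INF_greatest)
  then show "(INF i\<in>I. f i + ereal c) \<le> (INF i\<in>I. f i) + ereal c" by (simp add: ereal_minus_le_iff)
qed

context mainset
begin

definition GG :: "('a \<times> 'b) measure \<Rightarrow> ereal" where
  "GG \<nu> = (INF g\<in>pos_cont_funs. ereal (\<integral>x. phi g x \<partial>marg \<nu>))"

lemma pressure_GG: "hol_pressure \<tau> \<mu> \<psi> = (SUP \<nu>\<in>{\<nu>. holonomic \<tau> \<nu>}. GG \<nu>)"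
  unfolding hol_pressure_def GG_def phi_def by simp

lemma T_image: "(\<lambda>g y. g y * \<psi> y) ` pos_cont_funs = pos_cont_funs"
proof (intro set_eqI iffI)
  fix h :: "'a \<Rightarrow> real" assume "h \<in> (\<lambda>g y. g y * \<psi> y) ` pos_cont_funs"
  then obtain g where g: "g \<in> pos_cont_funs" "h = (\<lambda>y. g y * \<psi> y)" by blast
  then show "h \<in> pos_cont_funs" using ppsi
    by (auto simp: pos_cont_funs_def intro!: continuous_intros cpsi)
next
  fix h :: "'a \<Rightarrow> real" assume h: "h \<in> pos_cont_funs"
  have "(\<lambda>y. h y / \<psi> y) \<in> pos_cont_funs" using h ppsi
    by (auto simp: pos_cont_funs_def intro!: continuous_intros cpsi) (metis less_irrefl)
  moreover have B: "(\<lambda>y. h y / \<psi> y * \<psi> y) = h"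
  proof
    fix y have "\<psi> y \<noteq> 0" using ppsi by (metis less_irrefl)
    then show "h y / \<psi> y * \<psi> y = h y" by simp
  qed
  ultimately show "h \<in> (\<lambda>g y. g y * \<psi> y) ` pos_cont_funs"
    by (intro image_eqI[where f="\<lambda>g y. g y * \<psi> y" and x="\<lambda>y. h y / \<psi> y"]) (simp_all only: B)
qed

lemma entropy_eq:
  fixes \<nu> :: "('a \<times> 'b) measure"
  assumes pn: "prob_space \<nu>" and sn: "sets \<nu> = sets borel"
  shows "hol_entropy \<tau> \<mu> \<nu> + ereal (\<integral>x. ln (\<psi> x) \<partial>marg \<nu>) = GG \<nu>"
proof -
  note mf = marg_facts[OF pn sn]
  define c where "c = (\<integral>x. ln (\<psi> x) \<partial>marg \<nu>)"
  define a where "a g = (\<integral>x. ln (B_mu \<mu> \<tau> g x / g x) \<partial>marg \<nu>)" for g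
  have lpc: "continuous_on UNIV (\<lambda>x. ln (\<psi> x))"
    using ppsi by (intro continuous_on_ln cpsi) (metis less_irrefl)
  have key: "(\<integral>x. phi g x \<partial>marg \<nu>) = a (\<lambda>y. g y * \<psi> y) + c" if g: "g \<in> pos_cont_funs" for g
  proof -
    have gc: "continuous_on UNIV g" and gp: "\<And>x. g x > 0" using g by (auto simp: pos_cont_funs_def)
    have gps: "continuous_on UNIV (\<lambda>y. g y * \<psi> y)" by (intro continuous_intros gc cpsi)
    have gpp: "\<And>y. g y * \<psi> y > 0" using gp ppsi by simp
    have pw: "phi g x = ln (B_mu \<mu> \<tau> (\<lambda>y. g y * \<psi> y) x / (g x * \<psi> x)) + ln (\<psi> x)" for x
    proof -
      define Bv where "Bv = B_mu \<mu> \<tau> (\<lambda>y. g y * \<psi> y) x"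
      have b: "Bv > 0" unfolding Bv_def by (rule Bmu_pos[OF gps gpp])
      have gx: "g x > 0" by (rule gp)
      have px: "\<psi> x > 0" using ppsi by blast
      have eq: "Bv / g x = (Bv / (g x * \<psi> x)) * \<psi> x" using gx px by (simp add: field_simps)
      have pos: "Bv / (g x * \<psi> x) > 0" using b gx px by simp
      have n1: "Bv / (g x * \<psi> x) \<noteq> 0" "\<psi> x \<noteq> 0" using pos px by (metis less_irrefl)+
      have L: "ln ((Bv / (g x * \<psi> x)) * \<psi> x) = ln (Bv / (g x * \<psi> x)) + ln (\<psi> x)"
        unfolding ln_mult using n1 by simp
      have "ln (Bv / g x) = ln (Bv / (g x * \<psi> x)) + ln (\<psi> x)"
        by (subst eq) (rule L)
      then show ?thesis unfolding phi_def Bq_eq[OF gc] Bv_def .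
    qed
    have c1: "continuous_on UNIV (\<lambda>x. ln (B_mu \<mu> \<tau> (\<lambda>y. g y * \<psi> y) x / (g x * \<psi> x)))"
    proof -
      have ne1: "\<forall>x\<in>UNIV. g x * \<psi> x \<noteq> 0" using gpp by (metis less_irrefl)
      have ne2: "\<forall>x\<in>UNIV. B_mu \<mu> \<tau> (\<lambda>y. g y * \<psi> y) x / (g x * \<psi> x) \<noteq> 0"
        using Bmu_pos[OF gps gpp] ne1 by (metis divide_eq_0_iff less_irrefl)
      show ?thesis by (intro continuous_on_ln continuous_on_divide Bmu_cont[OF gps] gps ne2 ne1)
    qed
    have "(\<integral>x. phi g x \<partial>marg \<nu>) = (\<integral>x. ln (B_mu \<mu> \<tau> (\<lambda>y. g y * \<psi> y) x / (g x * \<psi> x)) + ln (\<psi> x) \<partial>marg \<nu>)"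
      by (simp add: pw)
    also have "\<dots> = a (\<lambda>y. g y * \<psi> y) + c"
      unfolding a_def c_def
      by (rule Bochner_Integration.integral_add[OF cont_integrable[OF cA c1 mf(1,2)] cont_integrable[OF cA lpc mf(1,2)]])
    finally show ?thesis .
  qed
  have "GG \<nu> = (INF g\<in>pos_cont_funs. ereal (a (\<lambda>y. g y * \<psi> y) + c))"
    unfolding GG_def by (intro INF_cong refl) (simp add: key)
  also have "\<dots> = (INF h\<in>(\<lambda>g y. g y * \<psi> y) ` pos_cont_funs. ereal (a h + c))"
    by (simp add: image_comp)
  also have "\<dots> = (INF h\<in>pos_cont_funs. ereal (a h) + ereal c)" by (simp add: T_image)
  also have "\<dots> = (INF h\<in>pos_cont_funs. ereal (a h)) + ereal c" by (rule INF_plus_ereal)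
  also have "\<dots> = hol_entropy \<tau> \<mu> \<nu> + ereal (\<integral>x. ln (\<psi> x) \<partial>marg \<nu>)"
    unfolding hol_entropy_def a_def c_def by simp
  finally show ?thesis by simp
qed

end

context mainset
begin

lemma hcont: "continuous_on UNIV (f :: 'a \<Rightarrow> real) \<Longrightarrow> continuous_on UNIV (\<lambda>\<omega>::'a\<times>'b. f (\<tau> (snd \<omega>) (fst \<omega>)) - f (fst \<omega>))"
proof -
  assume f: "continuous_on UNIV f"
  have c1: "continuous_on UNIV (\<lambda>\<omega>::'a\<times>'b. f (\<tau> (snd \<omega>) (fst \<omega>)))"
    by (rule continuous_on_compose2[OF f tcont2]) auto
  have cf: "continuous_on UNIV (\<lambda>\<omega>::'a\<times>'b. fst \<omega>)" by (intro continuous_intros)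
  have c2: "continuous_on UNIV (\<lambda>\<omega>::'a\<times>'b. f (fst \<omega>))"
    by (rule continuous_on_compose2[OF f cf]) auto
  show ?thesis by (rule continuous_on_diff[OF c1 c2])
qed

lemma limit_holonomic:
  fixes Ns :: "nat \<Rightarrow> ('a \<times> 'b) measure" and \<nu> :: "('a \<times> 'b) measure"
  assumes pn: "prob_space \<nu>" and sn: "sets \<nu> = sets borel"
    and conv: "\<forall>f::'a\<times>'b\<Rightarrow>real. continuous_on UNIV f \<longrightarrow> (\<lambda>n. \<integral>x. f x \<partial>Ns n) \<longlonglongrightarrow> (\<integral>x. f x \<partial>\<nu>)"
    and z: "\<And>f::'a\<Rightarrow>real. continuous_on UNIV f \<Longrightarrow> (\<lambda>n. \<integral>\<omega>. f (\<tau> (snd \<omega>) (fst \<omega>)) - f (fst \<omega>) \<partial>Ns n) \<longlonglongrightarrow> 0"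
  shows "holonomic \<tau> \<nu>"
  unfolding holonomic_def
proof (intro conjI pn sn allI impI)
  fix f :: "'a \<Rightarrow> real" assume f: "continuous_on UNIV f"
  have "(\<lambda>n. \<integral>\<omega>. f (\<tau> (snd \<omega>) (fst \<omega>)) - f (fst \<omega>) \<partial>Ns n) \<longlonglongrightarrow> (\<integral>\<omega>. f (\<tau> (snd \<omega>) (fst \<omega>)) - f (fst \<omega>) \<partial>\<nu>)"
    using conv hcont[OF f] by blast
  then show "(\<integral>\<omega>. f (\<tau> (snd \<omega>) (fst \<omega>)) - f (fst \<omega>) \<partial>\<nu>) = 0"
    using z[OF f] LIMSEQ_unique by blast
qed

lemma limit_phi:
  fixes Ns :: "nat \<Rightarrow> ('a \<times> 'b) measure" and \<nu> :: "('a \<times> 'b) measure"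
  assumes pn: "prob_space \<nu>" and sn: "sets \<nu> = sets borel"
    and pNs: "\<And>n. prob_space (Ns n)" and sNs: "\<And>n. sets (Ns n) = sets borel"
    and conv: "\<forall>f::'a\<times>'b\<Rightarrow>real. continuous_on UNIV f \<longrightarrow> (\<lambda>n. \<integral>x. f x \<partial>Ns n) \<longlonglongrightarrow> (\<integral>x. f x \<partial>\<nu>)"
    and g: "g \<in> pos_cont_funs"
  shows "(\<lambda>n. \<integral>x. phi g x \<partial>marg (Ns n)) \<longlonglongrightarrow> (\<integral>x. phi g x \<partial>marg \<nu>)"
proof -
  have c: "continuous_on UNIV (\<lambda>\<omega>::'a\<times>'b. phi g (fst \<omega>))"
    by (intro continuous_on_compose2[OF phi_cont[OF g]] continuous_intros) auto
  have "(\<lambda>n. \<integral>\<omega>. phi g (fst \<omega>) \<partial>Ns n) \<longlonglongrightarrow> (\<integral>\<omega>. phi g (fst \<omega>) \<partial>\<nu>)"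
    using conv c by blast
  then show ?thesis
    using marg_facts(3)[OF pn sn phi_cont[OF g]] marg_facts(3)[OF pNs sNs phi_cont[OF g]] by simp
qed

lemma one_pos: "(\<lambda>_. 1) \<in> pos_cont_funs"
  by (simp add: pos_cont_funs_def)

lemma GG_bound: "\<exists>B. \<forall>\<nu>. prob_space \<nu> \<and> sets \<nu> = sets borel \<longrightarrow> GG \<nu> \<le> ereal B"
proof -
  obtain B where B: "\<And>x. \<bar>\<psi> x\<bar> \<le> B" using cont_bound[OF cA cpsi] by blast
  have "\<psi> undefined > 0" using ppsi by blast
  then have Bp: "B > 0" using B[of undefined] by linarith
  have bnd: "phi (\<lambda>_. 1) x \<le> ln B" for x
  proof -
    interpret prob_space \<mu> by (rule pm)
    have "B_mu \<mu> \<tau> \<psi> x \<le> (\<integral>\<theta>. B \<partial>\<mu>)"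
      unfolding B_mu_def using B by (intro integral_mono int_mu[OF cpsi]) (auto simp: abs_le_iff)
    then have le: "B_mu \<mu> \<tau> \<psi> x \<le> B" by (simp add: prob_space)
    have pos: "B_mu \<mu> \<tau> \<psi> x > 0" by (rule Bmu_pos[OF cpsi]) (use ppsi in blast)
    have "phi (\<lambda>_. 1) x = ln (B_mu \<mu> \<tau> \<psi> x)"
      unfolding phi_def by (simp add: Bq_eq)
    then show ?thesis using le pos by (simp add: ln_mono)
  qed
  show ?thesis
  proof (intro exI allI impI)
    fix \<nu> :: "('a \<times> 'b) measure" assume a: "prob_space \<nu> \<and> sets \<nu> = sets borel"
    note mf = marg_facts[OF conjunct1[OF a] conjunct2[OF a]]
    interpret M: prob_space "marg \<nu>" by (rule mf(1))
    have "(\<integral>x. phi (\<lambda>_. 1) x \<partial>marg \<nu>) \<le> (\<integral>x. ln B \<partial>marg \<nu>)"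
      by (intro integral_mono cont_integrable[OF cA phi_cont[OF one_pos] mf(1,2)] bnd) simp
    then have "(\<integral>x. phi (\<lambda>_. 1) x \<partial>marg \<nu>) \<le> ln B" by (simp add: M.prob_space)
    moreover have "GG \<nu> \<le> ereal (\<integral>x. phi (\<lambda>_. 1) x \<partial>marg \<nu>)"
      unfolding GG_def by (rule INF_lower) (rule one_pos)
    ultimately show "GG \<nu> \<le> ereal (ln B)" by (meson ereal_less_eq(3) order_trans)
  qed
qed

lemma exists_holonomic: "\<exists>\<nu>. holonomic \<tau> \<nu>"
proof -
  define \<theta>0 :: 'b where "\<theta>0 = undefined"
  define x0 :: 'a where "x0 = undefined"
  define orb where "orb k = (\<tau> \<theta>0 ^^ k) x0" for k
  define Ns where "Ns n = distr (measure_pmf (pmf_of_set {..<Suc n})) (borel :: ('a \<times> 'b) measure) (\<lambda>k. (orb k, \<theta>0))" for n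
  have meas: "(\<lambda>k. (orb k, \<theta>0)) \<in> measurable (measure_pmf (pmf_of_set {..<Suc n})) (borel :: ('a \<times> 'b) measure)" for n
    by (simp add: measurable_pmf_measure1)
  have pNs: "prob_space (Ns n)" for n
    unfolding Ns_def by (rule prob_space.prob_space_distr[OF prob_space_measure_pmf meas])
  have sNs: "sets (Ns n) = sets borel" for n by (simp add: Ns_def)
  have intNs: "(\<integral>\<omega>. h \<omega> \<partial>Ns n) = (\<Sum>k<Suc n. h (orb k, \<theta>0)) / real (Suc n)"
    if "continuous_on UNIV h" for n and h :: "'a \<times> 'b \<Rightarrow> real"
  proof -
    have hm: "h \<in> borel_measurable borel" by (rule borel_measurable_continuous_onI[OF that])
    have "(\<integral>\<omega>. h \<omega> \<partial>Ns n) = (\<integral>k. h (orb k, \<theta>0) \<partial>measure_pmf (pmf_of_set {..<Suc n}))"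
      unfolding Ns_def by (rule integral_distr[OF meas hm])
    also have "\<dots> = (\<Sum>k<Suc n. h (orb k, \<theta>0)) / real (card {..<Suc n})"
      by (rule integral_pmf_of_set) auto
    finally show ?thesis by simp
  qed
  obtain d \<nu> where d: "strict_mono d" "prob_space \<nu>" "sets \<nu> = sets borel"
    "\<forall>f::'a\<times>'b\<Rightarrow>real. continuous_on UNIV f \<longrightarrow> (\<lambda>n. \<integral>x. f x \<partial>Ns (d n)) \<longlonglongrightarrow> (\<integral>x. f x \<partial>\<nu>)"
    using prob_seq_compact[of Ns, OF cAB pNs sNs] by blast
  have "holonomic \<tau> \<nu>"
  proof (rule limit_holonomic[OF d(2,3,4)])
    fix f :: "'a \<Rightarrow> real" assume f: "continuous_on UNIV f"
    obtain B where B: "\<And>x. \<bar>f x\<bar> \<le> B" using cont_bound[OF cA f] by blast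
    define a where "a n = (f (orb (Suc n)) - f (orb 0)) / real (Suc n)" for n
    have ia: "(\<integral>\<omega>. f (\<tau> (snd \<omega>) (fst \<omega>)) - f (fst \<omega>) \<partial>Ns n) = a n" for n
    proof -
      have "(\<integral>\<omega>. f (\<tau> (snd \<omega>) (fst \<omega>)) - f (fst \<omega>) \<partial>Ns n) = (\<Sum>k<Suc n. f (orb (Suc k)) - f (orb k)) / real (Suc n)"
        by (subst intNs[OF hcont[OF f]]) (simp add: orb_def)
      also have "\<dots> = a n" by (simp only: a_def sum_lessThan_telescope[of "\<lambda>k. f (orb k)" "Suc n"])
      finally show ?thesis .
    qed
    have "a \<longlonglongrightarrow> 0"
    proof (rule tendsto_sandwich[where f="\<lambda>n. - (2 * B) * inverse (real (Suc n))" and h="\<lambda>n. (2 * B) * inverse (real (Suc n))"])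
      have hb: "\<bar>f (orb (Suc n)) - f (orb 0)\<bar> \<le> 2 * B" for n using B[of "orb (Suc n)"] B[of "orb 0"] by linarith
      have ab: "\<bar>a n\<bar> \<le> (2 * B) * inverse (real (Suc n))" for n
      proof -
        have "\<bar>a n\<bar> = \<bar>f (orb (Suc n)) - f (orb 0)\<bar> * inverse (real (Suc n))"
          unfolding a_def divide_inverse abs_mult by simp
        also have "\<dots> \<le> (2 * B) * inverse (real (Suc n))"
          by (rule mult_right_mono[OF hb]) simp
        finally show ?thesis .
      qed
      have lo: "- (2 * B) * inverse (real (Suc n)) \<le> a n" for n using ab[of n] unfolding abs_le_iff by linarith
      have hi: "a n \<le> (2 * B) * inverse (real (Suc n))" for n using ab[of n] unfolding abs_le_iff by linarith
      show "\<forall>\<^sub>F n in sequentially. - (2 * B) * inverse (real (Suc n)) \<le> a n"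
        by (intro always_eventually allI lo)
      show "\<forall>\<^sub>F n in sequentially. a n \<le> (2 * B) * inverse (real (Suc n))"
        by (intro always_eventually allI hi)
      show "(\<lambda>n. - (2 * B) * inverse (real (Suc n))) \<longlonglongrightarrow> 0"
        using tendsto_mult_left[OF LIMSEQ_inverse_real_of_nat, of "- (2 * B)"] by simp
      show "(\<lambda>n. (2 * B) * inverse (real (Suc n))) \<longlonglongrightarrow> 0"
        using tendsto_mult_left[OF LIMSEQ_inverse_real_of_nat, of "2 * B"] by simp
    qed
    then have "(a \<circ> d) \<longlonglongrightarrow> 0" by (rule LIMSEQ_subseq_LIMSEQ[OF _ d(1)])
    then show "(\<lambda>n. \<integral>\<omega>. f (\<tau> (snd \<omega>) (fst \<omega>)) - f (fst \<omega>) \<partial>Ns (d n)) \<longlonglongrightarrow> 0"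
      by (simp add: ia o_def)
  qed
  then show ?thesis by blast
qed

end

theorem mainTheorem7:
  fixes \<tau> :: "'b::metric_space \<Rightarrow> 'a::metric_space \<Rightarrow> 'a"
    and \<mu> :: "'b measure" and \<psi> :: "'a \<Rightarrow> real"
  assumes "compact (UNIV :: 'a set)" and "compact (UNIV :: 'b set)"
    and "continuous_on UNIV (\<lambda>(\<theta>, x). \<tau> \<theta> x)"
    and "prob_space \<mu>" and "sets \<mu> = sets borel"
    and "continuous_on UNIV \<psi>" and "\<forall>x. \<psi> x > 0"
  shows "\<exists>\<nu>. equilibrium_state \<tau> \<mu> \<psi> \<nu>"
proof -
  interpret mainset \<tau> \<mu> \<psi> by (rule mainset.intro[OF assms])
  define P where "P = hol_pressure \<tau> \<mu> \<psi>"
  have PG: "P = (SUP \<nu>\<in>{\<nu>. holonomic \<tau> \<nu>}. GG \<nu>)" unfolding P_def by (rule pressure_GG)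
  have hol_ps: "prob_space \<nu> \<and> sets \<nu> = sets borel" if "holonomic \<tau> \<nu>" for \<nu>
    using that by (simp add: holonomic_def)
  have eqs: "equilibrium_state \<tau> \<mu> \<psi> \<nu>" if "holonomic \<tau> \<nu>" "GG \<nu> = P" for \<nu>
    unfolding equilibrium_state_def using that entropy_eq[of \<nu>] hol_ps[OF that(1)] by (simp add: P_def)
  have upper: "GG \<nu> \<le> P" if "holonomic \<tau> \<nu>" for \<nu>
    unfolding PG by (rule SUP_upper) (use that in simp)
  obtain \<nu>0 where \<nu>0: "holonomic \<tau> \<nu>0" using exists_holonomic by blast
  show ?thesis
  proof (cases "P = -\<infinity>")
    case True
    then have "GG \<nu>0 = P" using upper[OF \<nu>0] by simp
    then show ?thesis using eqs[OF \<nu>0] by blast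
  next
    case False
    obtain B where B: "\<And>\<nu>. prob_space \<nu> \<and> sets \<nu> = sets borel \<Longrightarrow> GG \<nu> \<le> ereal B"
      using GG_bound by blast
    have "P \<le> ereal B" unfolding PG by (rule SUP_least) (use B hol_ps in auto)
    then obtain p where p: "P = ereal p" using False by (cases P) auto
    have "\<forall>n. \<exists>\<nu>. holonomic \<tau> \<nu> \<and> ereal (p - inverse (real (Suc n))) < GG \<nu>"
    proof
      fix n
      have "ereal (p - inverse (real (Suc n))) < P" using p by simp
      then show "\<exists>\<nu>. holonomic \<tau> \<nu> \<and> ereal (p - inverse (real (Suc n))) < GG \<nu>"
        unfolding PG less_SUP_iff by auto
    qed
    then obtain Ns where Ns: "\<And>n. holonomic \<tau> (Ns n)" "\<And>n. ereal (p - inverse (real (Suc n))) < GG (Ns n)"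
      by metis
    have pNs: "prob_space (Ns n)" and sNs: "sets (Ns n) = sets borel" for n using hol_ps[OF Ns(1)[of n]] by auto
    obtain d \<nu> where d: "strict_mono d" "prob_space \<nu>" "sets \<nu> = sets borel"
      "\<forall>f::'a\<times>'b\<Rightarrow>real. continuous_on UNIV f \<longrightarrow> (\<lambda>n. \<integral>x. f x \<partial>Ns (d n)) \<longlonglongrightarrow> (\<integral>x. f x \<partial>\<nu>)"
      using prob_seq_compact[of Ns, OF cAB pNs sNs] by blast
    have hol: "holonomic \<tau> \<nu>"
    proof (rule limit_holonomic[OF d(2,3,4)])
      fix f :: "'a \<Rightarrow> real" assume f: "continuous_on UNIV f"
      have "(\<integral>\<omega>. f (\<tau> (snd \<omega>) (fst \<omega>)) - f (fst \<omega>) \<partial>Ns (d n)) = 0" for n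
        using Ns(1)[of "d n"] f unfolding holonomic_def by blast
      then show "(\<lambda>n. \<integral>\<omega>. f (\<tau> (snd \<omega>) (fst \<omega>)) - f (fst \<omega>) \<partial>Ns (d n)) \<longlonglongrightarrow> 0" by simp
    qed
    have "P \<le> GG \<nu>"
      unfolding GG_def p
    proof (rule INF_greatest)
      fix g :: "'a \<Rightarrow> real" assume g: "g \<in> pos_cont_funs"
      have lim: "(\<lambda>n. \<integral>x. phi g x \<partial>marg (Ns (d n))) \<longlonglongrightarrow> (\<integral>x. phi g x \<partial>marg \<nu>)"
        by (rule limit_phi[OF d(2,3) pNs sNs d(4) g])
      have lo: "p - inverse (real (Suc n)) \<le> (\<integral>x. phi g x \<partial>marg (Ns (d n)))" for n
      proof -
        have "ereal (p - inverse (real (Suc (d n)))) < GG (Ns (d n))" by (rule Ns(2))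
        also have "GG (Ns (d n)) \<le> ereal (\<integral>x. phi g x \<partial>marg (Ns (d n)))"
          unfolding GG_def by (rule INF_lower[OF g])
        finally have "p - inverse (real (Suc (d n))) < (\<integral>x. phi g x \<partial>marg (Ns (d n)))" by simp
        moreover have "inverse (real (Suc (d n))) \<le> inverse (real (Suc n))"
          using seq_suble[OF d(1), of n] by (simp add: le_imp_inverse_le)
        ultimately show ?thesis by linarith
      qed
      have "(\<lambda>n. p - inverse (real (Suc n))) \<longlonglongrightarrow> p - 0"
        by (intro tendsto_diff tendsto_const LIMSEQ_inverse_real_of_nat)
      then have "p \<le> (\<integral>x. phi g x \<partial>marg \<nu>)"
        using lim lo by (intro LIMSEQ_le) auto
      then show "ereal p \<le> ereal (\<integral>x. phi g x \<partial>marg \<nu>)" by simp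
    qed
    then have "GG \<nu> = P" using upper[OF hol] by simp
    then show ?thesis using eqs[OF hol] by blast
  qed
qed

end
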